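(* Let $p,q\in(0,1/2)$ with $\frac{\log p}{\log q}\notin\mathbb Q$. Then the topological (Kuratowski) limit $\lim_{t\to+\infty}tK_{pq}$ exists and equals $[0,+\infty)$, where $tK_{pq}=\{tx:x\in K_{pq}\}$.
   Context: For $p,q\in(0,1/2)$ let $S_1(x)=px$, $S_2(x)=qx$, $S_3(x)=px+1-p$, $S_4(x)=qx+1-q$, and let $K_{pq}$ be the attractor of $\{S_1,S_2,S_3,S_4\}$, i.e. the unique nonempty compact $K\subset\mathbb R$ with $K=\bigcup_{i=1}^4S_i(K)$. *)

theory Defs
  imports "HOL-Analysis.Analysis"
begin

definition attractor_pq :: "real \<Rightarrow> real \<Rightarrow> real set" where
  "attractor_pq p q = (THE K. K \<noteq> {} \<and> compact K \<and>
      K = (\<lambda>x. p * x) ` K \<union> (\<lambda>x. q * x) ` K \<union> (\<lambda>x. p * x + 1 - p) ` K \<union> (\<lambda>x. q * x + 1 - q) ` K)"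

definition kuratowski_liminf :: "('i \<Rightarrow> 'a::metric_space set) \<Rightarrow> 'i filter \<Rightarrow> 'a set" where
  "kuratowski_liminf A F = {x. \<forall>e>0. eventually (\<lambda>t. \<exists>y\<in>A t. dist x y < e) F}"

definition kuratowski_limsup :: "('i \<Rightarrow> 'a::metric_space set) \<Rightarrow> 'i filter \<Rightarrow> 'a set" where
  "kuratowski_limsup A F = {x. \<forall>e>0. frequently (\<lambda>t. \<exists>y\<in>A t. dist x y < e) F}"

definition kuratowski_limit_is :: "('i \<Rightarrow> 'a::metric_space set) \<Rightarrow> 'i filter \<Rightarrow> 'a set \<Rightarrow> bool" where
  "kuratowski_limit_is A F L \<longleftrightarrow> kuratowski_liminf A F = L \<and> kuratowski_limsup A F = L"

end

theory Submission
  imports Defs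
begin


lemma step1:
  fixes A B \<delta> :: real
  assumes A: "A > 0" and B: "B > 0" and irr: "A / B \<notin> \<rat>" and d: "\<delta> > 0"
  shows "\<exists>(m0::nat) (n0::nat). m0 \<ge> 1 \<and> n0 \<ge> 1 \<and>
     ((0 < real m0*A - real n0*B \<and> real m0*A - real n0*B < \<delta>) \<or> (0 < real n0*B - real m0*A \<and> real n0*B - real m0*A < \<delta>))"
proof -
  define r where "r = A / B"
  have r: "r > 0" using A B by (simp add: r_def)
  obtain N :: nat where N: "N > max (B/\<delta>) (1/r)" using reals_Archimedean2 by blast
  have "real N > 0" using N r
    by (metis less_max_iff_disj max.strict_boundedE order.strict_trans zero_less_divide_1_iff)
  hence N0: "N > 0" by simp
  obtain h k where hk: "0 < k" "k \<le> int N" "\<bar>of_int k * r - of_int h\<bar> < 1/N"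
    using Dirichlet_approx[OF N0] by blast
  have "1/N < r" using N r N0 by (simp add: field_simps)
  moreover have "r \<le> of_int k * r" using hk(1) r by simp
  ultimately have "real_of_int h > 0" using hk(3) by linarith
  hence h1: "h \<ge> 1" by simp
  have ne: "of_int k * r - of_int h \<noteq> 0"
  proof
    assume "of_int k * r - of_int h = 0"
    hence "r = of_int h / of_int k" using hk(1) by (simp add: field_simps)
    hence "r \<in> \<rat>" by simp
    thus False using irr r_def by simp
  qed
  have eq: "of_int k * A - of_int h * B = B * (of_int k * r - of_int h)"
    using B by (simp add: r_def field_simps)
  have "\<bar>of_int k * A - of_int h * B\<bar> < \<delta>"
  proof -
    have "\<bar>of_int k * A - of_int h * B\<bar> = B * \<bar>of_int k * r - of_int h\<bar>"
      using eq B by (simp add: abs_mult)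
    also have "\<dots> < B * (1/N)" using hk(3) B by (intro mult_strict_left_mono) auto
    also have "\<dots> < \<delta>" using N d N0 by (simp add: field_simps)
    finally show ?thesis .
  qed
  moreover have "of_int k * A - of_int h * B \<noteq> 0" using eq ne B by simp
  moreover have "real (nat k) = of_int k" "real (nat h) = of_int h" using hk(1) h1 by auto
  ultimately show ?thesis using hk(1) h1
    by (intro exI[of _ "nat k"] exI[of _ "nat h"]) (auto simp: abs_if split: if_splits)
qed

lemma cover:
  fixes A B \<gamma> \<delta> :: real and m0 n0 :: nat
  assumes B: "B > 0" and n0: "n0 \<ge> 1" and g: "\<gamma> = real m0 * A - real n0 * B"
    and g0: "0 < \<gamma>" and gd: "\<gamma> < \<delta>"
  shows "\<exists>S. \<forall>s\<ge>S. \<exists>m n::nat. \<bar>real m * A + real n * B - s\<bar> < \<delta>"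
proof -
  define C where "C = real n0 * B"
  have C: "C > 0" using B n0 by (simp add: C_def)
  define N1 where "N1 = nat \<lceil>C/\<gamma>\<rceil>"
  have N1: "C/\<gamma> \<le> real N1" unfolding N1_def by linarith
  show ?thesis
  proof (intro exI[of _ "real N1 * C"] allI impI)
    fix s assume s: "real N1 * C \<le> s"
    have s0: "s \<ge> 0" using s C by (meson mult_nonneg_nonneg of_nat_0_le_iff less_le order_trans)
    define N where "N = nat \<lfloor>s/C\<rfloor>"
    have sc: "0 \<le> s/C" using s0 C by simp
    have RN: "real N = of_int \<lfloor>s/C\<rfloor>" using sc unfolding N_def by simp
    have Nle: "real N \<le> s/C" and Ngt: "s/C < real N + 1" using RN by linarith+
    have "real N1 \<le> s/C" using s C by (simp add: field_simps)
    hence N1N: "N1 \<le> N" unfolding N_def by (metis le_nat_floor)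
    have NC: "real N * C \<le> s" "s < real N * C + C" using Nle Ngt C by (simp_all add: field_simps)
    define j where "j = nat \<lfloor>(s - real N * C)/\<gamma>\<rfloor>"
    have jle: "real j * \<gamma> \<le> s - real N * C" and jgt: "s - real N * C < real j * \<gamma> + \<gamma>"
    proof -
      have "0 \<le> (s - real N * C)/\<gamma>" using NC g0 by simp
      hence RJ: "real j = of_int \<lfloor>(s - real N * C)/\<gamma>\<rfloor>" unfolding j_def by simp
      hence "real j \<le> (s - real N * C)/\<gamma>" "(s - real N * C)/\<gamma> < real j + 1" by linarith+
      thus "real j * \<gamma> \<le> s - real N * C" "s - real N * C < real j * \<gamma> + \<gamma>"
        using g0 by (simp_all add: field_simps)
    qed
    have "real j * \<gamma> < C" using jle NC by linarith
    hence "real j < C/\<gamma>" using g0 by (simp add: field_simps)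
    hence jN: "j \<le> N" using N1 N1N by linarith
    have eq: "real (j*m0) * A + real ((N-j)*n0) * B = real N * C + real j * \<gamma>"
      using jN by (simp add: g C_def of_nat_diff algebra_simps)
    show "\<exists>m n::nat. \<bar>real m * A + real n * B - s\<bar> < \<delta>"
      by (intro exI[of _ "j*m0"] exI[of _ "(N-j)*n0"]) (use eq jle jgt gd in linarith)
  qed
qed

lemma dense_log:
  fixes A B \<delta> :: real
  assumes A: "A > 0" and B: "B > 0" and irr: "A / B \<notin> \<rat>" and d: "\<delta> > 0"
  shows "\<exists>S. \<forall>s\<ge>S. \<exists>m n::nat. \<bar>real m * A + real n * B - s\<bar> < \<delta>"
proof -
  obtain m0 n0 :: nat where mn: "m0 \<ge> 1" "n0 \<ge> 1"
    "(0 < real m0*A - real n0*B \<and> real m0*A - real n0*B < \<delta>) \<or> (0 < real n0*B - real m0*A \<and> real n0*B - real m0*A < \<delta>)"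
    using step1[OF A B irr d] by blast
  from mn(3) show ?thesis
  proof
    assume h: "0 < real m0*A - real n0*B \<and> real m0*A - real n0*B < \<delta>"
    show ?thesis using cover[OF B mn(2) refl] h by blast
  next
    assume h: "0 < real n0*B - real m0*A \<and> real n0*B - real m0*A < \<delta>"
    obtain S where S: "\<forall>s\<ge>S. \<exists>m n::nat. \<bar>real m * B + real n * A - s\<bar> < \<delta>"
      using cover[OF A mn(1) refl, of n0 B] h by blast
    show ?thesis
    proof (intro exI[of _ S] allI impI)
      fix s assume "S \<le> s"
      then obtain m n :: nat where "\<bar>real m * B + real n * A - s\<bar> < \<delta>" using S by blast
      thus "\<exists>m n::nat. \<bar>real m * A + real n * B - s\<bar> < \<delta>"
        by (intro exI[of _ n] exI[of _ m]) (simp add: add.commute)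
    qed
  qed
qed

lemma approx_main:
  fixes p q c x e :: real
  assumes p: "0 < p" "p < 1" and q: "0 < q" "q < 1" and irr: "ln p / ln q \<notin> \<rat>"
    and c: "c > 0" and x: "x > 0" and e: "e > 0"
  shows "\<exists>T. \<forall>t\<ge>T. \<exists>m n::nat. \<bar>t * (c * p^m * q^n) - x\<bar> < e"
proof -
  define A where "A = - ln p"
  define B where "B = - ln q"
  have A: "A > 0" using p by (simp add: A_def)
  have B: "B > 0" using q by (simp add: B_def)
  have AB: "A / B \<notin> \<rat>" using irr by (simp add: A_def B_def)
  define \<delta> where "\<delta> = ln (1 + e/x)"
  have d: "\<delta> > 0" using e x unfolding \<delta>_def by (intro ln_gt_zero) (simp add: field_simps)
  have "1 + e/x > 0" using e x by (simp add: add_pos_pos)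
  hence ed: "exp \<delta> - 1 = e/x" unfolding \<delta>_def by simp
  obtain S where S: "\<forall>s\<ge>S. \<exists>m n::nat. \<bar>real m * A + real n * B - s\<bar> < \<delta>"
    using dense_log[OF A B AB d] by blast
  show ?thesis
  proof (intro exI[of _ "x * exp S / c"] allI impI)
    fix t assume t: "x * exp S / c \<le> t"
    have tpos: "t > 0" using t x c by (smt (verit) divide_pos_pos exp_gt_zero mult_pos_pos)
    define s where "s = ln (t * c / x)"
    have "exp S \<le> t * c / x" using t x c by (simp add: field_simps)
    hence sS: "S \<le> s" unfolding s_def using tpos c x
      by (metis exp_le_cancel_iff exp_ln divide_pos_pos mult_pos_pos)
    then obtain m n :: nat where mn: "\<bar>real m * A + real n * B - s\<bar> < \<delta>" using S by blast
    define dd where "dd = s - (real m * A + real n * B)"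
    have pm: "p^m = exp (- real m * A)" using p
      by (simp add: A_def powr_realpow[symmetric] powr_def)
    have qn: "q^n = exp (- real n * B)" using q
      by (simp add: B_def powr_realpow[symmetric] powr_def)
    have es: "exp s = t * c / x" unfolding s_def using tpos c x by simp
    have "t * (c * p^m * q^n) = x * exp dd"
    proof -
      have "exp dd = exp s * exp (- real m * A) * exp (- real n * B)"
        unfolding dd_def by (simp add: exp_add[symmetric] exp_diff algebra_simps)
      thus ?thesis using es pm qn x by (simp add: field_simps)
    qed
    moreover have "\<bar>exp dd - 1\<bar> < e/x"
    proof (cases "dd \<ge> 0")
      case True
      have "exp dd < exp \<delta>" using mn True unfolding dd_def by simp
      moreover have "exp dd \<ge> 1" using True by simp
      ultimately show ?thesis using ed by linarith
    next
      case False
      have "exp dd \<ge> 1 + dd" by (rule exp_ge_add_one_self)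
      moreover have "\<delta> \<le> exp \<delta> - 1" using exp_ge_add_one_self[of \<delta>] by linarith
      moreover have "- dd < \<delta>" using mn unfolding dd_def by simp
      moreover have "exp dd < 1" using False by simp
      ultimately show ?thesis using False ed by linarith
    qed
    ultimately have "\<bar>t * (c * p^m * q^n) - x\<bar> < e"
    proof -
      assume h1: "t * (c * p^m * q^n) = x * exp dd" and h2: "\<bar>exp dd - 1\<bar> < e/x"
      have "\<bar>t * (c * p^m * q^n) - x\<bar> = x * \<bar>exp dd - 1\<bar>"
      proof -
        have "x * exp dd - x = x * (exp dd - 1)" by (simp add: algebra_simps)
        thus ?thesis using h1 x by (simp add: abs_mult)
      qed
      also have "\<dots> < x * (e/x)" using h2 x by (intro mult_strict_left_mono) auto
      also have "\<dots> = e" using x by simp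
      finally show ?thesis .
    qed
    thus "\<exists>m n::nat. \<bar>t * (c * p^m * q^n) - x\<bar> < e" by blast
  qed
qed



definition Fm :: "real \<Rightarrow> real \<Rightarrow> real set \<Rightarrow> real set" where
  "Fm p q K = (\<lambda>x. p * x) ` K \<union> (\<lambda>x. q * x) ` K \<union> (\<lambda>x. p * x + 1 - p) ` K \<union> (\<lambda>x. q * x + 1 - q) ` K"

lemma Fm_alt: "Fm p q K = (\<lambda>x. p*x+0) ` K \<union> (\<lambda>x. q*x+0) ` K \<union> (\<lambda>x. p*x+(1-p)) ` K \<union> (\<lambda>x. q*x+(1-q)) ` K"
  by (simp add: Fm_def add_diff_eq)

lemma contract:
  fixes K :: "real set"
  assumes K: "compact K" "K \<noteq> {}" and r: "r > 0" and sub: "(\<lambda>x. r*x+b) ` K \<subseteq> K"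
  shows "infdist (r*y+b) K \<le> r * infdist y K"
proof -
  obtain z where z: "z \<in> K" "infdist y K = dist y z"
    using infdist_attains_inf[OF compact_imp_closed[OF K(1)] K(2)] by blast
  have "r*z+b \<in> K" using sub z by blast
  hence "infdist (r*y+b) K \<le> dist (r*y+b) (r*z+b)" by (rule infdist_le)
  also have "\<dots> = r * dist y z" using r by (simp add: dist_real_def abs_mult right_diff_distrib[symmetric])
  finally show ?thesis using z by simp
qed

lemma Fm_maps:
  assumes "Fm p q K = K"
  shows "(\<lambda>x. p*x+0) ` K \<subseteq> K" "(\<lambda>x. q*x+0) ` K \<subseteq> K"
        "(\<lambda>x. p*x+(1-p)) ` K \<subseteq> K" "(\<lambda>x. q*x+(1-q)) ` K \<subseteq> K"
  using assms unfolding Fm_alt by blast+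

lemma uniq_sub:
  fixes p q :: real
  assumes p: "0 < p" "p < 1" and q: "0 < q" "q < 1"
    and K1: "K1 \<noteq> {}" "compact K1" "Fm p q K1 = K1"
    and K2: "K2 \<noteq> {}" "compact K2" "Fm p q K2 = K2"
  shows "K1 \<subseteq> K2"
proof
  define c where "c = max p q"
  have c: "0 < c" "c < 1" "p \<le> c" "q \<le> c" using p q by (auto simp: c_def)
  obtain a where a: "a \<in> K2" using K2 by blast
  obtain B where B: "\<forall>x\<in>K1. \<bar>x\<bar> \<le> B"
    using compact_imp_bounded[OF K1(2)] by (auto simp: bounded_iff)
  have B0: "B \<ge> 0" using B K1(1) by force
  define M where "M = B + \<bar>a\<bar>"
  have M0: "M \<ge> 0" using B0 by (simp add: M_def)
  have ind: "\<forall>x\<in>K1. infdist x K2 \<le> c^n * M" for n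
  proof (induction n)
    case 0
    show ?case
    proof
      fix x assume x: "x \<in> K1"
      have "infdist x K2 \<le> dist x a" using a by (rule infdist_le)
      also have "\<dots> \<le> M"
      proof -
        have bx: "\<bar>x\<bar> \<le> B" using B x by blast
        show ?thesis using bx abs_triangle_ineq4[of x a] unfolding M_def dist_real_def by linarith
      qed
      finally show "infdist x K2 \<le> c^0 * M" by simp
    qed
  next
    case (Suc n)
    show ?case
    proof
      fix x assume x: "x \<in> K1"
      hence "x \<in> Fm p q K1" using K1 by simp
      hence "\<exists>y r b. y \<in> K1 \<and> x = r*y+b \<and> (r = p \<or> r = q) \<and> (\<lambda>x. r*x+b) ` K2 \<subseteq> K2"
        unfolding Fm_alt using Fm_maps[OF K2(3)] by blast
      then obtain y r b where y: "y \<in> K1" and xr: "x = r*y+b" and rr: "r = p \<or> r = q"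
        and sub: "(\<lambda>x. r*x+b) ` K2 \<subseteq> K2" by blast
      have r0: "r > 0" and rc: "r \<le> c" using rr p q c by auto
      have "infdist x K2 \<le> r * infdist y K2" unfolding xr
        by (rule contract[OF K2(2) K2(1) r0 sub])
      also have "\<dots> \<le> c * (c^n * M)"
        using Suc y rc r0 infdist_nonneg[of y K2] by (intro mult_mono) auto
      finally show "infdist x K2 \<le> c^Suc n * M" by simp
    qed
  qed
  fix x assume x: "x \<in> K1"
  have "infdist x K2 = 0"
  proof (rule ccontr)
    assume "infdist x K2 \<noteq> 0"
    hence d: "infdist x K2 > 0" using infdist_nonneg[of x K2] by simp
    obtain n where n: "c^n < infdist x K2 / (M+1)"
      using real_arch_pow_inv[of "infdist x K2 / (M+1)" c] d M0 c by auto
    have "c^n * M \<le> c^n * (M+1)" using c by simp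
    also have "\<dots> < infdist x K2" using n M0 by (simp add: field_simps)
    moreover have "infdist x K2 \<le> c^n * M" using ind x by blast
    ultimately show False by linarith
  qed
  thus "x \<in> K2" using in_closed_iff_infdist_zero[OF compact_imp_closed[OF K2(2)] K2(1)] by simp
qed

inductive_set orb :: "real \<Rightarrow> real \<Rightarrow> real set" for p q where
  o0: "0 \<in> orb p q"
| o1: "x \<in> orb p q \<Longrightarrow> p*x \<in> orb p q"
| o2: "x \<in> orb p q \<Longrightarrow> q*x \<in> orb p q"
| o3: "x \<in> orb p q \<Longrightarrow> p*x+1-p \<in> orb p q"
| o4: "x \<in> orb p q \<Longrightarrow> q*x+1-q \<in> orb p q"

lemma orb_sub:
  assumes p: "0 < p" "p < 1" and q: "0 < q" "q < 1"
  shows "orb p q \<subseteq> {0..1}"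
proof
  fix x assume "x \<in> orb p q" thus "x \<in> {0..1}"
  proof (induction rule: orb.induct)
    case (o1 x) thus ?case using p by (auto simp: mult_le_one)
  next
    case (o2 x) thus ?case using q by (auto simp: mult_le_one)
  next
    case (o3 x)
    hence "p*x \<le> p" using p by (simp add: mult_left_le)
    moreover have "p*x \<ge> 0" using o3 p by simp
    ultimately show ?case using p by auto
  next
    case (o4 x)
    hence "q*x \<le> q" using q by (simp add: mult_left_le)
    moreover have "q*x \<ge> 0" using o4 q by simp
    ultimately show ?case using q by auto
  qed auto
qed

lemma orb_fixed: "Fm p q (orb p q) = orb p q"
proof
  show "Fm p q (orb p q) \<subseteq> orb p q" unfolding Fm_def by (auto intro: orb.intros)
  show "orb p q \<subseteq> Fm p q (orb p q)"
  proof
    fix x assume "x \<in> orb p q" thus "x \<in> Fm p q (orb p q)"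
    proof (cases rule: orb.cases)
      case o0
      have "p * 0 \<in> (\<lambda>x. p * x) ` orb p q" using orb.o0 by blast
      thus ?thesis using o0 unfolding Fm_def by auto
    qed (auto simp: Fm_def)
  qed
qed

lemma closure_affine_image:
  fixes S :: "real set"
  assumes "bounded S"
  shows "closure ((\<lambda>x. r*x+b) ` S) = (\<lambda>x. r*x+b) ` closure S"
proof
  have cpt: "compact ((\<lambda>x. r*x+b) ` closure S)"
    using assms by (intro compact_continuous_image continuous_intros) (simp add: compact_closure)
  show "closure ((\<lambda>x. r*x+b) ` S) \<subseteq> (\<lambda>x. r*x+b) ` closure S"
    by (rule closure_minimal) (use closure_subset cpt compact_imp_closed in auto)
  show "(\<lambda>x. r*x+b) ` closure S \<subseteq> closure ((\<lambda>x. r*x+b) ` S)"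
    by (rule image_closure_subset) (auto intro: continuous_intros closure_subset[THEN subsetD])
qed

lemma closure_Fm:
  fixes S :: "real set"
  assumes "bounded S"
  shows "closure (Fm p q S) = Fm p q (closure S)"
  unfolding Fm_alt closure_Un closure_affine_image[OF assms] ..

lemma attractor_eq:
  fixes p q :: real
  assumes p: "0 < p" "p < 1" and q: "0 < q" "q < 1"
  shows "attractor_pq p q = closure (orb p q)"
proof -
  have bd: "bounded (orb p q)" using orb_sub[OF p q] bounded_subset[OF bounded_closed_interval] by blast
  define K0 where "K0 = closure (orb p q)"
  have P: "K0 \<noteq> {} \<and> compact K0 \<and> K0 = Fm p q K0"
    unfolding K0_def using bd orb.o0[of p q]
    by (auto simp: compact_closure closure_Fm[OF bd, symmetric] orb_fixed)
  have "(THE K. K \<noteq> {} \<and> compact K \<and> K = Fm p q K) = K0"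
  proof (rule the_equality)
    show "K0 \<noteq> {} \<and> compact K0 \<and> K0 = Fm p q K0" by (rule P)
    fix K assume K: "K \<noteq> {} \<and> compact K \<and> K = Fm p q K"
    show "K = K0"
      using uniq_sub[OF p q, of K K0] uniq_sub[OF p q, of K0 K] K P by auto
  qed
  thus ?thesis unfolding attractor_pq_def Fm_def[symmetric] K0_def .
qed



lemma orb_mult:
  assumes "x \<in> orb p q" shows "p^m * q^n * x \<in> orb p q"
proof -
  have A: "q^n * x \<in> orb p q" for n
    by (induction n) (use assms in \<open>auto simp: mult.assoc intro: orb.o2\<close>)
  show ?thesis
    by (induction m) (use A in \<open>auto simp: mult.assoc intro: orb.o1\<close>)
qed

theorem theorem7:
  fixes p q :: real
  assumes "0 < p" "p < 1/2" "0 < q" "q < 1/2"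
    and "ln p / ln q \<notin> \<rat>"
  shows "kuratowski_limit_is (\<lambda>t. (\<lambda>x. t * x) ` attractor_pq p q) at_top {0..}"
proof -
  have p: "0 < p" "p < 1" and q: "0 < q" "q < 1" using assms by auto
  define K where "K = attractor_pq p q"
  have KK: "K = closure (orb p q)" unfolding K_def by (rule attractor_eq[OF p q])
  have Ksub: "K \<subseteq> {0..1}" unfolding KK using orb_sub[OF p q]
    by (intro closure_minimal) auto
  have orbK: "orb p q \<subseteq> K" unfolding KK by (rule closure_subset)
  have zK: "0 \<in> K" using orbK orb.o0 by blast
  have cK: "(1-p) * p^m * q^n \<in> K" for m n
  proof -
    have "p*0+1-p \<in> orb p q" by (intro orb.o3 orb.o0)
    hence "p^m * q^n * (1-p) \<in> orb p q" by (intro orb_mult) simp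
    thus ?thesis using orbK by (auto simp: algebra_simps)
  qed
  define A where "A = (\<lambda>t. (\<lambda>x. t * x) ` K)"
  have low: "{0..} \<subseteq> kuratowski_liminf A at_top"
  proof
    fix x :: real assume "x \<in> {0..}"
    hence x: "x \<ge> 0" by simp
    show "x \<in> kuratowski_liminf A at_top"
      unfolding kuratowski_liminf_def
    proof (intro CollectI allI impI)
      fix e :: real assume e: "e > 0"
      show "eventually (\<lambda>t. \<exists>y\<in>A t. dist x y < e) at_top"
      proof (cases "x = 0")
        case True
        have "\<exists>y\<in>A t. dist x y < e" for t
          using zK e True unfolding A_def by (intro bexI[of _ "t*0"]) auto
        thus ?thesis by simp
      next
        case False
        hence xp: "x > 0" using x by simp
        obtain T where T: "\<forall>t\<ge>T. \<exists>m n::nat. \<bar>t * ((1-p) * p^m * q^n) - x\<bar> < e"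
          using approx_main[OF p q assms(5) _ xp e, of "1-p"] p by auto
        show ?thesis unfolding eventually_at_top_linorder
        proof (intro exI[of _ T] allI impI)
          fix t assume "t \<ge> T"
          then obtain m n :: nat where "\<bar>t * ((1-p) * p^m * q^n) - x\<bar> < e" using T by blast
          thus "\<exists>y\<in>A t. dist x y < e" using cK[of m n] unfolding A_def
            by (intro bexI[of _ "t * ((1-p) * p^m * q^n)"]) (auto simp: dist_real_def abs_minus_commute)
        qed
      qed
    qed
  qed
  have up: "kuratowski_limsup A at_top \<subseteq> {0..}"
  proof
    fix x :: real assume xs: "x \<in> kuratowski_limsup A at_top"
    show "x \<in> {0..}"
    proof (rule ccontr)
      assume "x \<notin> {0..}"
      hence xn: "x < 0" by simp
      have "frequently (\<lambda>t. \<exists>y\<in>A t. dist x y < - x) at_top"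
        using xs xn unfolding kuratowski_limsup_def by auto
      moreover have "eventually (\<lambda>t. \<not> (\<exists>y\<in>A t. dist x y < - x)) at_top"
        unfolding eventually_at_top_linorder
      proof (intro exI[of _ 0] allI impI)
        fix t :: real assume t: "t \<ge> 0"
        show "\<not> (\<exists>y\<in>A t. dist x y < - x)"
        proof
          assume "\<exists>y\<in>A t. dist x y < - x"
          then obtain k where k: "k \<in> K" "dist x (t*k) < -x" unfolding A_def by blast
          have "k \<ge> 0" using k Ksub by auto
          hence "t*k \<ge> 0" using t by simp
          thus False using k xn by (auto simp: dist_real_def)
        qed
      qed
      ultimately show False by (simp add: frequently_def)
    qed
  qed
  have lu: "kuratowski_liminf A at_top \<subseteq> kuratowski_limsup A at_top"
    unfolding kuratowski_liminf_def kuratowski_limsup_def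
    by (auto intro: eventually_frequently)
  show ?thesis unfolding kuratowski_limit_is_def A_def[symmetric] K_def[symmetric]
    using low up lu by blast
qed

end
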